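(* Consider the random pairwise load balancing process on $n\ge 2$ nodes with initial load vector $\ell(0)\in\mathbb{N}_0^n$ and initial discrepancy $\Delta=\max_i\ell_i(0)-\min_i\ell_i(0)\ge 1$. Let $T_1$ be the first time step $t$ with $\Phi(\ell(t)) < n$. Then with high probability (probability $1-O(1/n)$), $T_1 = O(n\log n + n\log\Delta)$, with an absolute constant in the $O(\cdot)$.
   Context: Random pairwise load balancing process: $n$ nodes (complete graph), $m$ indistinguishable tokens. The load vector at time $t\in\mathbb{N}_0$ is $\ell(t)=(\ell_1(t),\dots,\ell_n(t))$, $\ell_i(t)$ the number of tokens at node $i$. In each time step $t$, independently of everything before, an ordered pair $(u,v)$ of distinct nodes is chosen uniformly at random, and the loads are updated to $\ell_u(t+1)=\lceil(\ell_u(t)+\ell_v(t))/2\rceil$, $\ell_v(t+1)=\lfloor(\ell_u(t)+\ell_v(t))/2\rfloor$; other loads unchanged. The average load is $\varnothing=m/n$. The potential of a load vector $\ell$ is $\Phi(\ell)=\sum_{i=1}^n(\ell_i-\varnothing)^2$. *)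

theory Defs
  imports "HOL-Probability.Probability"
begin

text \<open>Load vectors on n nodes are functions nat => nat; only the entries at indices
  0..n-1 are meaningful (the nodes are 0,...,n-1).\<close>

definition lb_pairs :: "nat \<Rightarrow> (nat \<times> nat) set" where
  "lb_pairs n = {(u, v). u < n \<and> v < n \<and> u \<noteq> v}"

definition lb_update :: "(nat \<Rightarrow> nat) \<Rightarrow> nat \<Rightarrow> nat \<Rightarrow> (nat \<Rightarrow> nat)" where
  "lb_update l u v = l(u := (l u + l v + 1) div 2, v := (l u + l v) div 2)"

text \<open>Distribution of the trajectory (l(0), ..., l(t)) as a list of length t+1.\<close>
fun lb_traj :: "nat \<Rightarrow> (nat \<Rightarrow> nat) \<Rightarrow> nat \<Rightarrow> (nat \<Rightarrow> nat) list pmf" where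
  "lb_traj n l0 0 = return_pmf [l0]"
| "lb_traj n l0 (Suc t) =
     bind_pmf (lb_traj n l0 t)
       (\<lambda>xs. map_pmf (\<lambda>(u, v). xs @ [lb_update (last xs) u v]) (pmf_of_set (lb_pairs n)))"

definition lb_avg :: "nat \<Rightarrow> (nat \<Rightarrow> nat) \<Rightarrow> real" where
  "lb_avg n l = (\<Sum>i<n. real (l i)) / real n"

definition lb_potential :: "nat \<Rightarrow> (nat \<Rightarrow> nat) \<Rightarrow> real" where
  "lb_potential n l = (\<Sum>i<n. (real (l i) - lb_avg n l)^2)"

definition lb_discrepancy :: "nat \<Rightarrow> (nat \<Rightarrow> nat) \<Rightarrow> nat" where
  "lb_discrepancy n l = Max (l ` {..<n}) - Min (l ` {..<n})"

end

theory Submission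
  imports Defs
begin


lemma pot_alt:
  assumes "n > 0"
  shows "lb_potential n l = (\<Sum>i<n. real (l i)^2) - (\<Sum>i<n. real (l i))^2 / real n"
proof -
  define S where "S = (\<Sum>i<n. real (l i))"
  have "lb_potential n l = (\<Sum>i<n. real (l i)^2 - 2 * (S / n) * real (l i) + (S/n)^2)"
    unfolding lb_potential_def lb_avg_def S_def[symmetric]
    by (rule sum.cong) (auto simp: power2_diff)
  also have "\<dots> = (\<Sum>i<n. real (l i)^2) - 2 * (S/n) * S + n * (S/n)^2"
    by (simp add: sum.distrib sum_subtractf sum_distrib_left S_def)
  also have "\<dots> = (\<Sum>i<n. real (l i)^2) - S^2 / n"
    using assms by (simp add: field_simps power2_eq_square)
  finally show ?thesis by (simp add: S_def)
qed

lemma pot_nonneg: "lb_potential n l \<ge> 0"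
  unfolding lb_potential_def by (auto intro: sum_nonneg)

lemma e1: fixes x y k :: real assumes "x + y = 2*k" shows "k^2 + k^2 \<le> x^2 + y^2 - ((x-y)^2-1)/2"
proof -
  have y: "y = 2*k - x" using assms by simp
  have "x^2 + y^2 - ((x-y)^2-1)/2 = 2*k^2 + 1/2" unfolding y by (simp add: power2_eq_square field_simps)
  thus ?thesis by simp
qed
lemma e2: fixes x y k :: real assumes "x + y = 2*k+1" shows "(k+1)^2 + k^2 \<le> x^2 + y^2 - ((x-y)^2-1)/2"
proof -
  have y: "y = 2*k + 1 - x" using assms by simp
  have "x^2 + y^2 - ((x-y)^2-1)/2 = (k+1)^2 + k^2" unfolding y by (simp add: power2_eq_square field_simps)
  thus ?thesis by simp
qed
lemma sum_sq_diff:
  "(\<Sum>u<n. \<Sum>v<n. (real (l u) - real (l v))^2)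
     = 2 * real n * (\<Sum>i<n. real (l i)^2) - 2 * (\<Sum>i<n. real (l i))^2"
proof -
  define Q where "Q = (\<Sum>v<n. real (l v)^2)"
  define S where "S = (\<Sum>v<n. real (l v))"
  have "(\<Sum>u<n. \<Sum>v<n. (real (l u) - real (l v))^2)
     = (\<Sum>u<n. \<Sum>v<n. real (l u)^2 + real (l v)^2 - 2 * real (l u) * real (l v))"
    by (intro sum.cong refl) (simp add: power2_diff)
  also have "\<dots> = (\<Sum>u<n. real n * real (l u)^2 + Q - 2 * real (l u) * S)"
    unfolding Q_def S_def by (intro sum.cong refl) (simp add: sum.distrib sum_subtractf sum_distrib_left)
  also have "\<dots> = (\<Sum>u<n. real n * real (l u)^2) + (\<Sum>u<n. Q) - (\<Sum>u<n. 2 * real (l u) * S)"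
    by (simp add: sum.distrib sum_subtractf)
  also have "(\<Sum>u<n. real n * real (l u)^2) = real n * Q" by (simp add: Q_def sum_distrib_left)
  also have "(\<Sum>u<n. 2 * real (l u) * S) = (2 * (\<Sum>u<n. real (l u))) * S" by (simp add: sum_distrib_left sum_distrib_right)
  also have "\<dots> = 2 * S * S" by (simp add: S_def)
  also have "real n * Q + (\<Sum>u<n. Q) - 2 * S * S = 2 * real n * Q - 2 * S^2"
    by (simp add: power2_eq_square)
  finally show ?thesis by (simp add: Q_def S_def)
qed

lemma drop_nat:
  fixes a b :: nat
  shows "real ((a+b+1) div 2)^2 + real ((a+b) div 2)^2 \<le> real a^2 + real b^2 - ((real a - real b)^2 - 1)/2"
proof (cases "even (a+b)")
  case True
  then obtain k where k: "a + b = 2*k" by blast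
  hence "(a+b+1) div 2 = k" "(a+b) div 2 = k" by auto
  moreover have "real a + real b = 2 * real k" using k by (metis of_nat_add of_nat_mult of_nat_numeral)
  ultimately show ?thesis using e1 by simp
next
  case False
  then obtain k where k: "a + b = 2*k+1" by (metis oddE)
  hence "(a+b+1) div 2 = k+1" "(a+b) div 2 = k" by auto
  moreover have "real a + real b = 2 * real k + 1" using k by (metis of_nat_add of_nat_mult of_nat_numeral of_nat_1)
  ultimately show ?thesis using e2[of "real a" "real b" "real k"] by (simp add: add.commute)
qed

lemma sum_update:
  fixes F :: "nat \<Rightarrow> real"
  assumes "u < n" "v < n" "u \<noteq> v"
  shows "(\<Sum>i<n. F (lb_update l u v i)) = (\<Sum>i<n. F (l i)) + (F ((l u + l v + 1) div 2) - F (l u))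
           + (F ((l u + l v) div 2) - F (l v))"
proof -
  have "(\<Sum>i<n. F (lb_update l u v i)) = (\<Sum>i<n. F (l i) + ((if i = u then F ((l u + l v + 1) div 2) - F (l u) else 0)
     + (if i = v then F ((l u + l v) div 2) - F (l v) else 0)))"
    by (intro sum.cong refl) (auto simp: lb_update_def assms)
  also have "\<dots> = (\<Sum>i<n. F (l i)) + (F ((l u + l v + 1) div 2) - F (l u))
           + (F ((l u + l v) div 2) - F (l v))"
    using assms by (simp add: sum.distrib)
  finally show ?thesis .
qed


lemma pot_update:
  assumes "u < n" "v < n" "u \<noteq> v"
  shows "lb_potential n (lb_update l u v) \<le> lb_potential n l - (real (l u) - real (l v))^2/2 + 1/2"
proof -
  have n: "n > 0" using assms by auto
  have s: "real ((l u + l v + 1) div 2) + real ((l u + l v) div 2) = real (l u) + real (l v)"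
  proof -
    have "(l u + l v + 1) div 2 + (l u + l v) div 2 = l u + l v" by presburger
    thus ?thesis by (metis of_nat_add)
  qed
  have S: "(\<Sum>i<n. real (lb_update l u v i)) = (\<Sum>i<n. real (l i))"
    using sum_update[OF assms, of real l] s by simp
  have Q: "(\<Sum>i<n. real (lb_update l u v i)^2) = (\<Sum>i<n. real (l i)^2)
      + (real ((l u + l v + 1) div 2)^2 - real (l u)^2) + (real ((l u + l v) div 2)^2 - real (l v)^2)"
    using sum_update[OF assms, of "\<lambda>x. real x ^2" l] by simp
  show ?thesis
  proof -
    have e: "((real (l u) - real (l v))^2 - 1)/2 = (real (l u) - real (l v))^2/2 - 1/2"
      by (simp add: diff_divide_distrib)
    show ?thesis using drop_nat[of "l u" "l v"]
      unfolding pot_alt[OF n, of "lb_update l u v"] pot_alt[OF n, of l] S Q e by linarith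
  qed
qed

lemma card_pairs: "card (lb_pairs n) \<le> n * n" "finite (lb_pairs n)"
proof -
  have sub: "lb_pairs n \<subseteq> {..<n} \<times> {..<n}" by (auto simp: lb_pairs_def)
  show "finite (lb_pairs n)" by (rule finite_subset[OF sub]) auto
  show "card (lb_pairs n) \<le> n * n" using card_mono[OF _ sub] by simp
qed

lemma pairs_ne: "n \<ge> 2 \<Longrightarrow> lb_pairs n \<noteq> {}"
proof -
  assume "n \<ge> 2"
  hence "(0,1) \<in> lb_pairs n" by (auto simp: lb_pairs_def)
  thus ?thesis by blast
qed

lemma sum_pairs_sq:
  "(\<Sum>p\<in>lb_pairs n. (real (l (fst p)) - real (l (snd p)))^2) = (\<Sum>u<n. \<Sum>v<n. (real (l u) - real (l v))^2)"
proof -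
  have sub: "lb_pairs n \<subseteq> {..<n} \<times> {..<n}" by (auto simp: lb_pairs_def)
  have "(\<Sum>p\<in>lb_pairs n. (real (l (fst p)) - real (l (snd p)))^2) = (\<Sum>p\<in>{..<n} \<times> {..<n}. (real (l (fst p)) - real (l (snd p)))^2)"
  proof (rule sum.mono_neutral_left)
    show "finite ({..<n} \<times> {..<n})" by simp
    show "lb_pairs n \<subseteq> {..<n} \<times> {..<n}" by (rule sub)
    show "\<forall>i\<in>{..<n} \<times> {..<n} - lb_pairs n. (real (l (fst i)) - real (l (snd i)))^2 = 0"
    proof
      fix i assume "i \<in> {..<n} \<times> {..<n} - lb_pairs n"
      hence "fst i = snd i" unfolding lb_pairs_def by (cases i) auto
      thus "(real (l (fst i)) - real (l (snd i)))^2 = 0" by simp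
    qed
  qed
  also have "\<dots> = (\<Sum>(u,v)\<in>{..<n} \<times> {..<n}. (real (l u) - real (l v))^2)"
    by (simp add: case_prod_beta)
  also have "\<dots> = (\<Sum>u<n. \<Sum>v<n. (real (l u) - real (l v))^2)"
    by (simp add: sum.cartesian_product)
  finally show ?thesis .
qed

lemma step_real:
  assumes n2: "n \<ge> 2" and big: "lb_potential n l \<ge> real n"
  shows "(\<Sum>p\<in>lb_pairs n. lb_potential n (lb_update l (fst p) (snd p))) / real (card (lb_pairs n))
          \<le> (1 - 1/(2*real n)) * lb_potential n l"
proof -
  define P where "P = lb_potential n l"
  define c where "c = real (card (lb_pairs n))"
  define X where "X = (\<lambda>p. (real (l (fst p)) - real (l (snd p)))^2)"
  define Y where "Y = (\<Sum>p\<in>lb_pairs n. lb_potential n (lb_update l (fst p) (snd p)))"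
  have n: "n > 0" using n2 by auto
  have c0: "c > 0" unfolding c_def using pairs_ne[OF n2] card_pairs(2) by (simp add: card_gt_0_iff)
  have cn: "c \<le> real n * real n" unfolding c_def using card_pairs(1)[of n] by (metis of_nat_le_iff of_nat_mult)
  have P0: "P \<ge> real n" using big by (simp add: P_def)
  have "Y \<le> (\<Sum>p\<in>lb_pairs n. (P + 1/2) - X p / 2)"
    unfolding Y_def
  proof (rule sum_mono)
    fix p assume "p \<in> lb_pairs n"
    then obtain u v where p: "p = (u,v)" "u < n" "v < n" "u \<noteq> v" by (cases p) (auto simp: lb_pairs_def)
    show "lb_potential n (lb_update l (fst p) (snd p)) \<le> (P + 1/2) - X p / 2"
      using pot_update[OF p(2-4), of l] unfolding p(1) P_def X_def by simp
  qed
  also have "\<dots> = c * (P + 1/2) - (\<Sum>p\<in>lb_pairs n. X p) / 2"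
    unfolding sum_subtractf sum_divide_distrib[symmetric] by (simp add: c_def)
  also have "(\<Sum>p\<in>lb_pairs n. X p) = 2 * real n * P"
  proof -
    define Q where "Q = (\<Sum>i<n. real (l i)^2)"
    define S where "S = (\<Sum>i<n. real (l i))"
    have "(\<Sum>p\<in>lb_pairs n. X p) = 2 * real n * Q - 2 * S^2"
      unfolding X_def sum_pairs_sq sum_sq_diff Q_def S_def ..
    moreover have "P = Q - S^2 / real n" unfolding P_def pot_alt[OF n] Q_def S_def ..
    ultimately show ?thesis using n by (simp add: right_diff_distrib)
  qed
  finally have sm: "Y \<le> c * (P + 1/2) - real n * P" by simp
  have "Y / c \<le> (c * (P + 1/2) - real n * P) / c"
    using sm c0 by (rule divide_right_mono[OF _ less_imp_le])
  also have "\<dots> = P + 1/2 - real n * P / c" using c0 by (simp add: diff_divide_distrib)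
  also have "real n * P / (real n * real n) \<le> real n * P / c"
    using c0 cn P0 n by (intro divide_left_mono) auto
  hence "P + 1/2 - real n * P / c \<le> P + 1/2 - P / real n" using n by simp
  also have "\<dots> \<le> (1 - 1/(2*real n)) * P"
  proof -
    have "1/2 \<le> P / (2 * real n)" using P0 n by (simp add: divide_simps)
    moreover have "P / real n = P/(2*real n) + P/(2*real n)" by simp
    moreover have "(1 - 1/(2*real n)) * P = P - P/(2*real n)" by (simp add: algebra_simps)
    ultimately show ?thesis by linarith
  qed
  finally show ?thesis by (simp add: Y_def c_def P_def)
qed



definition Gf :: "nat \<Rightarrow> (nat \<Rightarrow> nat) list \<Rightarrow> ennreal" where
  "Gf n xs = (if (\<forall>s<length xs. real n \<le> lb_potential n (xs!s)) then ennreal (lb_potential n (last xs)) else 0)"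

lemma traj_len: "xs \<in> set_pmf (lb_traj n l0 t) \<Longrightarrow> length xs = Suc t"
proof (induction t arbitrary: xs)
  case 0 thus ?case by simp
next
  case (Suc t)
  from Suc.prems obtain ys p where "ys \<in> set_pmf (lb_traj n l0 t)" "xs = (case p of (u,v) \<Rightarrow> ys @ [lb_update (last ys) u v])"
    by (auto simp: set_bind_pmf)
  thus ?case using Suc.IH by (auto split: prod.splits)
qed

lemma inner_bound:
  assumes n2: "n \<ge> 2" and ne: "ys \<noteq> []"
  shows "(\<integral>\<^sup>+p. Gf n ((\<lambda>(u,v). ys @ [lb_update (last ys) u v]) p) \<partial>measure_pmf (pmf_of_set (lb_pairs n)))
          \<le> ennreal (1 - 1/(2*real n)) * Gf n ys"
proof (cases "\<forall>s<length ys. real n \<le> lb_potential n (ys!s)")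
  case True
  have G: "Gf n ys = ennreal (lb_potential n (last ys))" using True by (simp add: Gf_def)
  have big: "real n \<le> lb_potential n (last ys)"
    using True ne by (simp add: last_conv_nth)
  have fin: "finite (lb_pairs n)" by (rule card_pairs(2))
  have pne: "lb_pairs n \<noteq> {}" by (rule pairs_ne[OF n2])
  have "(\<integral>\<^sup>+p. Gf n ((\<lambda>(u,v). ys @ [lb_update (last ys) u v]) p) \<partial>measure_pmf (pmf_of_set (lb_pairs n)))
      \<le> (\<integral>\<^sup>+p. ennreal (lb_potential n (lb_update (last ys) (fst p) (snd p))) \<partial>measure_pmf (pmf_of_set (lb_pairs n)))"
    by (intro nn_integral_mono) (auto simp: Gf_def split: prod.splits)
  also have "\<dots> = (\<Sum>p\<in>lb_pairs n. ennreal (lb_potential n (lb_update (last ys) (fst p) (snd p)))) / of_nat (card (lb_pairs n))"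
    by (rule nn_integral_pmf_of_set[OF pne fin])
  also have "\<dots> = ennreal ((\<Sum>p\<in>lb_pairs n. lb_potential n (lb_update (last ys) (fst p) (snd p))) / real (card (lb_pairs n)))"
    using fin pne
    by (simp add: sum_ennreal pot_nonneg sum_nonneg divide_ennreal card_gt_0_iff ennreal_of_nat_eq_real_of_nat)
  also have "\<dots> \<le> ennreal ((1 - 1/(2*real n)) * lb_potential n (last ys))"
    by (rule ennreal_leI, rule step_real[OF n2 big])
  also have "\<dots> = ennreal (1 - 1/(2*real n)) * Gf n ys"
    unfolding G using n2 by (subst ennreal_mult) (auto simp: pot_nonneg field_simps)
  finally show ?thesis .
next
  case False
  then obtain s where s: "s < length ys" "\<not> real n \<le> lb_potential n (ys!s)" by auto
  have "Gf n ((\<lambda>(u,v). ys @ [lb_update (last ys) u v]) p) = 0" for p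
    using s by (auto simp: Gf_def nth_append split: prod.splits)
  thus ?thesis by simp
qed

lemma step_int:
  assumes n2: "n \<ge> 2"
  shows "(\<integral>\<^sup>+xs. Gf n xs \<partial>measure_pmf (lb_traj n l0 (Suc t)))
         \<le> ennreal (1 - 1/(2*real n)) * (\<integral>\<^sup>+xs. Gf n xs \<partial>measure_pmf (lb_traj n l0 t))"
proof -
  have "(\<integral>\<^sup>+xs. Gf n xs \<partial>measure_pmf (lb_traj n l0 (Suc t)))
     = (\<integral>\<^sup>+ys. (\<integral>\<^sup>+p. Gf n ((\<lambda>(u,v). ys @ [lb_update (last ys) u v]) p) \<partial>measure_pmf (pmf_of_set (lb_pairs n))) \<partial>measure_pmf (lb_traj n l0 t))"
    by simp
  also have "\<dots> \<le> (\<integral>\<^sup>+ys. ennreal (1 - 1/(2*real n)) * Gf n ys \<partial>measure_pmf (lb_traj n l0 t))"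
  proof (rule nn_integral_mono_AE)
    show "AE ys in measure_pmf (lb_traj n l0 t). (\<integral>\<^sup>+p. Gf n ((\<lambda>(u,v). ys @ [lb_update (last ys) u v]) p) \<partial>measure_pmf (pmf_of_set (lb_pairs n)))
          \<le> ennreal (1 - 1/(2*real n)) * Gf n ys"
      unfolding AE_measure_pmf_iff
    proof
      fix ys assume "ys \<in> set_pmf (lb_traj n l0 t)"
      hence "ys \<noteq> []" using traj_len by fastforce
      thus "(\<integral>\<^sup>+p. Gf n ((\<lambda>(u,v). ys @ [lb_update (last ys) u v]) p) \<partial>measure_pmf (pmf_of_set (lb_pairs n)))
          \<le> ennreal (1 - 1/(2*real n)) * Gf n ys" by (rule inner_bound[OF n2])
    qed
  qed
  also have "\<dots> = ennreal (1 - 1/(2*real n)) * (\<integral>\<^sup>+xs. Gf n xs \<partial>measure_pmf (lb_traj n l0 t))"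
    by (rule nn_integral_cmult) simp
  finally show ?thesis .
qed

lemma iter_int:
  assumes n2: "n \<ge> 2"
  shows "(\<integral>\<^sup>+xs. Gf n xs \<partial>measure_pmf (lb_traj n l0 t))
         \<le> ennreal ((1 - 1/(2*real n))^t * lb_potential n l0)"
proof (induction t)
  case 0
  show ?case by (simp add: Gf_def)
next
  case (Suc t)
  have q0: "0 \<le> 1 - 1/(2*real n)" using n2 by (simp add: field_simps)
  have "(\<integral>\<^sup>+xs. Gf n xs \<partial>measure_pmf (lb_traj n l0 (Suc t)))
       \<le> ennreal (1 - 1/(2*real n)) * (\<integral>\<^sup>+xs. Gf n xs \<partial>measure_pmf (lb_traj n l0 t))"
    by (rule step_int[OF n2])
  also have "\<dots> \<le> ennreal (1 - 1/(2*real n)) * ennreal ((1 - 1/(2*real n))^t * lb_potential n l0)"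
    by (rule mult_left_mono[OF Suc.IH]) simp
  also have "\<dots> = ennreal ((1 - 1/(2*real n))^Suc t * lb_potential n l0)"
  proof -
    have "ennreal ((1 - 1/(2*real n)) * ((1 - 1/(2*real n))^t * lb_potential n l0))
        = ennreal (1 - 1/(2*real n)) * ennreal ((1 - 1/(2*real n))^t * lb_potential n l0)"
      by (rule ennreal_mult) (use q0 in \<open>auto intro: mult_nonneg_nonneg pot_nonneg\<close>)
    thus ?thesis by (simp add: mult.assoc)
  qed
  finally show ?case .
qed

lemma bad_bound:
  assumes n2: "n \<ge> 2"
  shows "real n * measure_pmf.prob (lb_traj n l0 T) {xs. \<not> (\<exists>t\<le>T. lb_potential n (xs ! t) < real n)}
        \<le> (1 - 1/(2*real n))^T * lb_potential n l0"
proof -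
  define B where "B = {xs :: (nat \<Rightarrow> nat) list. \<not> (\<exists>t\<le>T. lb_potential n (xs ! t) < real n)}"
  have "ennreal (real n) * emeasure (measure_pmf (lb_traj n l0 T)) B
      = (\<integral>\<^sup>+xs. ennreal (real n) * indicator B xs \<partial>measure_pmf (lb_traj n l0 T))"
    by (rule nn_integral_cmult_indicator[symmetric]) simp
  also have "\<dots> \<le> (\<integral>\<^sup>+xs. Gf n xs \<partial>measure_pmf (lb_traj n l0 T))"
  proof (rule nn_integral_mono_AE, unfold AE_measure_pmf_iff, intro ballI)
    fix xs assume xs: "xs \<in> set_pmf (lb_traj n l0 T)"
    hence len: "length xs = Suc T" by (rule traj_len)
    show "ennreal (real n) * indicator B xs \<le> Gf n xs"
    proof (cases "xs \<in> B")
      case True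
      hence all: "\<forall>s<length xs. real n \<le> lb_potential n (xs!s)" using len by (auto simp: B_def not_less less_Suc_eq_le)
      have ne: "xs \<noteq> []" using len by auto
      have "last xs = xs ! T" using ne len by (simp add: last_conv_nth)
      hence "real n \<le> lb_potential n (last xs)"
        using all len by simp
      thus ?thesis using True all by (simp add: Gf_def)
    qed simp
  qed
  also have "\<dots> \<le> ennreal ((1 - 1/(2*real n))^T * lb_potential n l0)" by (rule iter_int[OF n2])
  finally have "ennreal (real n) * ennreal (measure_pmf.prob (lb_traj n l0 T) B) \<le> ennreal ((1 - 1/(2*real n))^T * lb_potential n l0)"
    by (simp add: measure_pmf.emeasure_eq_measure)
  hence "ennreal (real n * measure_pmf.prob (lb_traj n l0 T) B) \<le> ennreal ((1 - 1/(2*real n))^T * lb_potential n l0)"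
    by (simp add: ennreal_mult)
  moreover have "0 \<le> (1 - 1/(2*real n))^T * lb_potential n l0"
    using n2 by (intro mult_nonneg_nonneg zero_le_power pot_nonneg) (simp add: field_simps)
  ultimately show ?thesis unfolding B_def by (simp add: ennreal_le_iff)
qed



lemma pot_le:
  assumes n: "n > 0"
  shows "lb_potential n l \<le> real n * real (lb_discrepancy n l)^2"
proof -
  define A where "A = l ` {..<n}"
  have finA: "finite A" and neA: "A \<noteq> {}" using n by (auto simp: A_def)
  define mx where "mx = Max A"
  define mn where "mn = Min A"
  have bnd: "mn \<le> l i \<and> l i \<le> mx" if "i < n" for i
    using that finA by (auto simp: mx_def mn_def A_def)
  have mnmx: "mn \<le> mx" using bnd[of 0] n by auto
  define S where "S = (\<Sum>i<n. real (l i))"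
  have S1: "S \<le> real n * real mx"
    unfolding S_def using sum_bounded_above[of "{..<n}" "\<lambda>i. real (l i)" "real mx"] bnd by auto
  have S2: "real n * real mn \<le> S"
    unfolding S_def using sum_bounded_below[of "{..<n}" "real mn" "\<lambda>i. real (l i)"] bnd by auto
  have av1: "lb_avg n l \<le> real mx" unfolding lb_avg_def S_def[symmetric] using S1 n by (simp add: field_simps)
  have av2: "real mn \<le> lb_avg n l" unfolding lb_avg_def S_def[symmetric] using S2 n by (simp add: field_simps)
  have D: "real (lb_discrepancy n l) = real mx - real mn"
    unfolding lb_discrepancy_def A_def[symmetric] mx_def[symmetric] mn_def[symmetric] using mnmx by simp
  have trm: "(real (l i) - lb_avg n l)^2 \<le> real (lb_discrepancy n l)^2" if "i < n" for i
  proof -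
    have "\<bar>real (l i) - lb_avg n l\<bar> \<le> real (lb_discrepancy n l)"
      unfolding D using bnd[OF that] av1 av2 by (auto simp: abs_le_iff)
    hence "\<bar>real (l i) - lb_avg n l\<bar>^2 \<le> real (lb_discrepancy n l)^2"
      by (intro power_mono) auto
    thus ?thesis by simp
  qed
  have "lb_potential n l \<le> real (card {..<n}) * real (lb_discrepancy n l)^2"
    unfolding lb_potential_def by (rule sum_bounded_above) (use trm in auto)
  thus ?thesis by simp
qed

theorem lemma2:
  "\<exists>C>0. \<forall>(n::nat) (l0::nat \<Rightarrow> nat) (T::nat).
      n \<ge> 2 \<longrightarrow> lb_discrepancy n l0 \<ge> 1 \<longrightarrow>
      real T \<ge> C * (real n * ln (real n) + real n * ln (real (lb_discrepancy n l0))) \<longrightarrow>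
      measure_pmf.prob (lb_traj n l0 T)
        {xs. \<exists>t\<le>T. lb_potential n (xs ! t) < real n} \<ge> 1 - C / real n"
proof (intro exI[of _ 4] conjI allI impI)
  show "(0::real) < 4" by simp
  fix n :: nat and l0 :: "nat \<Rightarrow> nat" and T :: nat
  assume n2: "n \<ge> 2" and d1: "lb_discrepancy n l0 \<ge> 1"
    and TT: "real T \<ge> 4 * (real n * ln (real n) + real n * ln (real (lb_discrepancy n l0)))"
  define q where "q = 1 - 1/(2*real n)"
  define d where "d = real (lb_discrepancy n l0)"
  define P where "P = lb_potential n l0"
  define B where "B = {xs :: (nat \<Rightarrow> nat) list. \<not> (\<exists>t\<le>T. lb_potential n (xs ! t) < real n)}"
  have n0: "real n > 0" using n2 by simp
  have d0: "d \<ge> 1" using d1 by (simp add: d_def)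
  have q0: "0 \<le> q" using n2 by (simp add: q_def field_simps)
  have qe: "q \<le> exp (- (1/(2*real n)))"
    unfolding q_def using exp_ge_add_one_self[of "- (1/(2*real n))"] by simp
  have "q^T \<le> exp (- (1/(2*real n)))^T" by (rule power_mono[OF qe q0])
  also have "\<dots> = exp (real T * (- (1/(2*real n))))" by (rule exp_of_nat_mult[symmetric])
  also have "\<dots> \<le> exp (- ln ((real n * d)^2))"
  proof -
    have "ln ((real n * d)^2) = 2 * (ln (real n) + ln d)"
      using n0 d0 by (simp add: ln_realpow ln_mult)
    also have "\<dots> \<le> real T / (2 * real n)"
      using TT n0 unfolding d_def by (simp add: field_simps)
    finally show ?thesis by simp
  qed
  also have "\<dots> = 1 / (real n * d)^2"
    using n0 d0 by (simp add: exp_minus field_simps)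
  finally have qT: "q^T \<le> 1 / (real n * d)^2" .
  have P0: "0 \<le> P" "P \<le> real n * d^2" using pot_le[of n l0] n2 by (auto simp: P_def d_def pot_nonneg)
  have "q^T * P \<le> 1 / (real n * d)^2 * (real n * d^2)"
    by (rule mult_mono[OF qT P0(2)]) (use P0 in auto)
  also have "\<dots> = 1 / real n" using n0 d0 by (simp add: field_simps power2_eq_square)
  finally have qP: "q^T * P \<le> 1 / real n" .
  have "real n * measure_pmf.prob (lb_traj n l0 T) B \<le> q^T * P"
    using bad_bound[OF n2, of l0 T] by (simp add: B_def q_def P_def)
  hence "real n * measure_pmf.prob (lb_traj n l0 T) B \<le> 1 / real n" using qP by linarith
  hence "measure_pmf.prob (lb_traj n l0 T) B \<le> 1 / real n / real n"
    by (subst pos_le_divide_eq[OF n0]) (simp add: mult.commute)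
  also have "\<dots> \<le> 4 / real n" using n0 n2 by (simp add: field_simps)
  finally have pB: "measure_pmf.prob (lb_traj n l0 T) B \<le> 4 / real n" .
  have "{xs. \<exists>t\<le>T. lb_potential n (xs ! t) < real n} = space (measure_pmf (lb_traj n l0 T)) - B"
    by (auto simp: B_def)
  hence "measure_pmf.prob (lb_traj n l0 T) {xs. \<exists>t\<le>T. lb_potential n (xs ! t) < real n}
         = 1 - measure_pmf.prob (lb_traj n l0 T) B"
    using measure_pmf.prob_compl[of B "lb_traj n l0 T"] by simp
  thus "measure_pmf.prob (lb_traj n l0 T) {xs. \<exists>t\<le>T. lb_potential n (xs ! t) < real n} \<ge> 1 - 4 / real n"
    using pB by simp
qed

end
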